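(* Let $T>0$, $x_0\in\mathbb{R}$, and let $(W,a)\in\mathcal{C}$. For $\gamma_P\in(0,1)$ let $\tilde U_P(x):=-\frac{\exp(-\gamma_P x)-1}{\gamma_P}$. Then the family of random variables $\left(\tilde U_P(X_T^a-W)\right)_{0<\gamma_P<1}$ is uniformly integrable, and consequently $$\mathbb{E}\left[X_T^a-W\right]=\mathbb{E}\left[\lim_{\gamma_P\to0}\tilde U_P(X_T^a-W)\right]=\lim_{\gamma_P\to0}\mathbb{E}\left[\tilde U_P(X_T^a-W)\right].$$
   Context: Fix $T>0$. Let $(\Omega,\mathcal{F},\mathbb{P})$ be a probability space carrying a standard one-dimensional Brownian motion $B=(B_t)_{t\in[0,T]}$, and let $\mathbb{F}=(\mathcal{F}_t)_{t\in[0,T]}$ be its natural completed filtration. Let $\mathbb{H}_2$ be the set of $\mathbb{F}$-predictable processes $a=(a_t)_{t\in[0,T]}$ with values in $[0,\infty)$ such that $\mathbb{E}[\exp(q\int_0^T|a_t|^2dt)]<\infty$ for all $q>0$. For $a\in\mathbb{H}_2$ and a fixed $x_0\in\mathbb{R}$, set $X_t^a=x_0+\int_0^t a_s\,ds+B_t$. Let $\mathcal{W}$ be the set of $\mathcal{F}_T$-measurable random variables $W$ with $\mathbb{E}[\exp(qW)]<\infty$ for all $q\in\mathbb{R}\setminus\{0\}$, and $\mathcal{C}=\{(W,a):W\in\mathcal{W},a\in\mathbb{H}_2\}$. *)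

theory Defs
  imports "HOL-Probability.Probability"
begin

definition std_brownian_motion :: "'a measure \<Rightarrow> real \<Rightarrow> (real \<Rightarrow> 'a \<Rightarrow> real) \<Rightarrow> bool" where
  "std_brownian_motion M T B \<longleftrightarrow>
     prob_space M \<and>
     (\<forall>t\<in>{0..T}. B t \<in> borel_measurable M) \<and>
     (AE \<omega> in M. B 0 \<omega> = 0) \<and>
     (AE \<omega> in M. continuous_on {0..T} (\<lambda>t. B t \<omega>)) \<and>
     (\<forall>s t. 0 \<le> s \<and> s < t \<and> t \<le> T \<longrightarrow>
        distributed M lborel (\<lambda>\<omega>. B t \<omega> - B s \<omega>) (normal_density 0 (sqrt (t - s)))) \<and>
     (\<forall>(n::nat) (u::nat \<Rightarrow> real). 0 \<le> u 0 \<and> u n \<le> T \<and> (\<forall>i<n. u i < u (Suc i)) \<longrightarrow>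
        prob_space.indep_vars M (\<lambda>_. borel) (\<lambda>i \<omega>. B (u (Suc i)) \<omega> - B (u i) \<omega>) {..<n})"

definition nat_filtration :: "'a measure \<Rightarrow> (real \<Rightarrow> 'a \<Rightarrow> real) \<Rightarrow> real \<Rightarrow> 'a measure" where
  "nat_filtration M B t = sigma (space M)
     ((\<Union>s\<in>{0..t}. {B s -` A \<inter> space M | A. A \<in> sets borel}) \<union> null_sets M)"

definition predictable_sigma :: "'a measure \<Rightarrow> real \<Rightarrow> (real \<Rightarrow> 'a measure) \<Rightarrow> (real \<times> 'a) measure" where
  "predictable_sigma M T F = sigma ({0..T} \<times> space M)
     ({{0} \<times> A | A. A \<in> sets (F 0)} \<union>
      {{s<..t} \<times> A | s t A. 0 \<le> s \<and> s < t \<and> t \<le> T \<and> A \<in> sets (F s)})"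

definition exp_moment_enn :: "'a measure \<Rightarrow> real \<Rightarrow> ('a \<Rightarrow> ennreal) \<Rightarrow> ennreal" where
  "exp_moment_enn M q Y = (\<integral>\<^sup>+\<omega>. (if Y \<omega> = \<infinity> then \<infinity> else ennreal (exp (q * enn2real (Y \<omega>)))) \<partial>M)"

definition H2 :: "'a measure \<Rightarrow> real \<Rightarrow> (real \<Rightarrow> 'a \<Rightarrow> real) \<Rightarrow> (real \<Rightarrow> 'a \<Rightarrow> real) set" where
  "H2 M T B = {a. (\<lambda>(t, \<omega>). a t \<omega>) \<in> measurable (predictable_sigma M T (nat_filtration M B)) borel \<and>
                 (\<forall>t\<in>{0..T}. \<forall>\<omega>\<in>space M. a t \<omega> \<ge> 0) \<and>
                 (\<forall>q>0. exp_moment_enn M q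
                    (\<lambda>\<omega>. \<integral>\<^sup>+ s. ennreal ((a s \<omega>)\<^sup>2) * indicator {0..T} s \<partial>lborel) < \<infinity>)}"

definition Wset :: "'a measure \<Rightarrow> real \<Rightarrow> (real \<Rightarrow> 'a \<Rightarrow> real) \<Rightarrow> ('a \<Rightarrow> real) set" where
  "Wset M T B = {W. W \<in> borel_measurable (nat_filtration M B T) \<and>
                   (\<forall>q. q \<noteq> 0 \<longrightarrow> integrable M (\<lambda>\<omega>. exp (q * W \<omega>)))}"

definition state_proc :: "real \<Rightarrow> (real \<Rightarrow> 'a \<Rightarrow> real) \<Rightarrow> (real \<Rightarrow> 'a \<Rightarrow> real) \<Rightarrow> real \<Rightarrow> 'a \<Rightarrow> real" where
  "state_proc x0 B a t \<omega> = x0 + (LINT s:{0..t}|lborel. a s \<omega>) + B t \<omega>"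

definition U_tilde :: "real \<Rightarrow> real \<Rightarrow> real" where
  "U_tilde \<gamma> x = - (exp (- \<gamma> * x) - 1) / \<gamma>"

definition unif_integrable :: "'a measure \<Rightarrow> 'i set \<Rightarrow> ('i \<Rightarrow> 'a \<Rightarrow> real) \<Rightarrow> bool" where
  "unif_integrable M I Y \<longleftrightarrow>
     (\<forall>i\<in>I. Y i \<in> borel_measurable M) \<and>
     ((\<lambda>K::real. SUP i\<in>I. \<integral>\<^sup>+\<omega>. ennreal \<bar>Y i \<omega>\<bar> * indicator {\<omega>\<in>space M. \<bar>Y i \<omega>\<bar> > K} \<omega> \<partial>M)
        \<longlongrightarrow> 0) at_top"

end

theory Submission
  imports Defs
begin


lemma filt_sub:
  assumes "std_brownian_motion M T B" "0 \<le> s" "s \<le> T"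
  shows "sets (nat_filtration M B s) \<subseteq> sets M"
proof -
  have Bm: "B r \<in> borel_measurable M" if "r \<in> {0..s}" for r
    using assms that unfolding std_brownian_motion_def by auto
  let ?G = "(\<Union>r\<in>{0..s}. {B r -` A \<inter> space M | A. A \<in> sets borel}) \<union> null_sets M"
  have G: "?G \<subseteq> Pow (space M)" using sets.sets_into_space by auto
  have "?G \<subseteq> sets M" using Bm measurable_sets by blast
  then show ?thesis unfolding nat_filtration_def using sigma_le_sets[OF G] by auto
qed

lemma pred_sub:
  assumes "std_brownian_motion M T B" "0 < T"
  shows "sets (predictable_sigma M T (nat_filtration M B)) \<subseteq> sets (restrict_space (lborel \<Otimes>\<^sub>M M) ({0..T} \<times> space M))"
proof -
  let ?O = "{0..T} \<times> space M"
  let ?G = "{{0} \<times> A | A. A \<in> sets (nat_filtration M B 0)} \<union>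
      {{s<..t} \<times> A | s t A. 0 \<le> s \<and> s < t \<and> t \<le> T \<and> A \<in> sets (nat_filtration M B s)}"
  have O: "?O \<in> sets (lborel \<Otimes>\<^sub>M M)" by (intro pair_measureI) auto
  have F: "A \<in> sets M" if "A \<in> sets (nat_filtration M B s)" "0 \<le> s" "s \<le> T" for A s
    using filt_sub[OF assms(1) that(2,3)] that(1) by auto
  have G1: "?G \<subseteq> Pow ?O" using F sets.sets_into_space assms(2) by fastforce
  have G2: "?G \<subseteq> sets (restrict_space (lborel \<Otimes>\<^sub>M M) ?O)"
  proof
    fix X assume "X \<in> ?G"
    then have "X \<in> sets (lborel \<Otimes>\<^sub>M M)"
      using F assms(2) by (auto intro!: pair_measureI)
    moreover have "X \<subseteq> ?O" using G1 \<open>X \<in> ?G\<close> by (meson Pow_iff subsetD)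
    ultimately show "X \<in> sets (restrict_space (lborel \<Otimes>\<^sub>M M) ?O)"
      using O by (subst sets_restrict_space_iff) (auto simp: Int_absorb2 sets.sets_into_space)
  qed
  have "?O \<in> sets (restrict_space (lborel \<Otimes>\<^sub>M M) ?O)"
    using O by (metis sets.top space_restrict_space2)
  then show ?thesis unfolding predictable_sigma_def using sigma_le_sets[OF G1] G2 by auto
qed

lemma space_pred: "space (predictable_sigma M T F) = {0..T} \<times> space M"
  unfolding predictable_sigma_def by (rule space_measure_of_conv)

lemma joint_meas:
  assumes "std_brownian_motion M T B" "0 < T" "a \<in> H2 M T B"
  shows "(\<lambda>(\<omega>, s). indicator {0..T} s * a s \<omega>) \<in> borel_measurable (M \<Otimes>\<^sub>M lborel)"
proof -
  let ?O = "{0..T} \<times> space M"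
  have O: "?O \<in> sets (lborel \<Otimes>\<^sub>M M)" by (intro pair_measureI) auto
  have am: "(\<lambda>(t, \<omega>). a t \<omega>) \<in> borel_measurable (predictable_sigma M T (nat_filtration M B))"
    using assms(3) unfolding H2_def by auto
  have sub: "subalgebra (restrict_space (lborel \<Otimes>\<^sub>M M) ?O) (predictable_sigma M T (nat_filtration M B))"
    unfolding subalgebra_def using pred_sub[OF assms(1,2)] O
    by (simp add: space_pred space_restrict_space2)
  have "(\<lambda>(t, \<omega>). a t \<omega>) \<in> borel_measurable (restrict_space (lborel \<Otimes>\<^sub>M M) ?O)"
    by (rule measurable_from_subalg[OF sub am])
  then have m1: "(\<lambda>x. indicator ?O x *\<^sub>R (case x of (t, \<omega>) \<Rightarrow> a t \<omega>)) \<in> borel_measurable (lborel \<Otimes>\<^sub>M M)"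
    using O by (subst (asm) borel_measurable_restrict_space_iff) (auto simp: Int_absorb2 sets.sets_into_space)
  have m2: "(\<lambda>(\<omega>, s). indicator ?O (s, \<omega>) *\<^sub>R a s \<omega>) \<in> borel_measurable (M \<Otimes>\<^sub>M lborel)"
    using measurable_comp[OF measurable_pair_swap' m1] by (simp add: split_beta comp_def)
  show ?thesis
    by (rule measurable_cong[THEN iffD1, OF _ m2]) (auto simp: space_pair_measure indicator_def)
qed

lemma I_meas:
  assumes "std_brownian_motion M T B" "0 < T" "a \<in> H2 M T B"
  shows "(\<lambda>\<omega>. LINT s:{0..T}|lborel. a s \<omega>) \<in> borel_measurable M"
proof -
  have "(\<lambda>\<omega>. \<integral>s. indicator {0..T} s * a s \<omega> \<partial>lborel) \<in> borel_measurable M"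
    using joint_meas[OF assms] by (rule lborel.borel_measurable_lebesgue_integral[where f="\<lambda>\<omega> s. indicator {0..T} s * a s \<omega>", simplified])
  then show ?thesis by (simp add: set_lebesgue_integral_def)
qed

lemma abs_le_sq: "\<bar>x::real\<bar> \<le> 1 + x\<^sup>2"
proof (cases "\<bar>x\<bar> \<le> 1")
  case False
  then have "\<bar>x\<bar> * 1 \<le> \<bar>x\<bar> * \<bar>x\<bar>" by (intro mult_left_mono) auto
  then show ?thesis by (simp add: power2_eq_square abs_mult_self_eq)
qed (simp add: add_increasing2)

lemma J_eq: "(\<integral>\<^sup>+ s. ennreal ((a s \<omega>)\<^sup>2) * indicator {0..T} s \<partial>lborel)
     = (\<integral>\<^sup>+ s. ennreal ((indicator {0..T} s * a s \<omega>)\<^sup>2) \<partial>lborel)"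
  by (intro nn_integral_cong) (auto simp: indicator_def)

lemma J_meas:
  assumes "std_brownian_motion M T B" "0 < T" "a \<in> H2 M T B"
  shows "(\<lambda>\<omega>. \<integral>\<^sup>+ s. ennreal ((a s \<omega>)\<^sup>2) * indicator {0..T} s \<partial>lborel) \<in> borel_measurable M"
proof -
  note jm = joint_meas[OF assms]
  have "(\<lambda>(\<omega>, s). ennreal ((indicator {0..T} s * a s \<omega>)\<^sup>2)) \<in> borel_measurable (M \<Otimes>\<^sub>M lborel)"
    using measurable_compose[OF jm, of "\<lambda>x. ennreal (x\<^sup>2)"] by (simp add: split_beta)
  then have "(\<lambda>\<omega>. \<integral>\<^sup>+ s. ennreal ((indicator {0..T} s * a s \<omega>)\<^sup>2) \<partial>lborel) \<in> borel_measurable M"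
    by (rule lborel.borel_measurable_nn_integral[where f="\<lambda>\<omega> s. ennreal ((indicator {0..T} s * a s \<omega>)\<^sup>2)", simplified])
  then show ?thesis by (simp add: J_eq)
qed

lemma I_bound:
  assumes "std_brownian_motion M T B" "0 < T" "a \<in> H2 M T B" "\<omega> \<in> space M"
  shows "ennreal \<bar>LINT s:{0..T}|lborel. a s \<omega>\<bar> \<le> ennreal T + (\<integral>\<^sup>+ s. ennreal ((a s \<omega>)\<^sup>2) * indicator {0..T} s \<partial>lborel)"
proof -
  let ?h = "\<lambda>s. indicator {0..T} s * a s \<omega>"
  have hm: "?h \<in> borel_measurable lborel"
    using measurable_Pair2[OF joint_meas[OF assms(1-3)] assms(4)] by simp
  have "ennreal \<bar>LINT s:{0..T}|lborel. a s \<omega>\<bar> \<le> (\<integral>\<^sup>+ s. ennreal (norm (?h s)) \<partial>lborel)"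
  proof (cases "integrable lborel ?h")
    case True
    then show ?thesis using integral_norm_bound_ennreal[OF True] by (simp add: set_lebesgue_integral_def)
  next
    case False
    then show ?thesis by (simp add: set_lebesgue_integral_def not_integrable_integral_eq)
  qed
  also have "\<dots> \<le> (\<integral>\<^sup>+ s. ennreal (indicator {0..T} s) + ennreal ((?h s)\<^sup>2) \<partial>lborel)"
  proof (intro nn_integral_mono)
    fix s
    have "norm (?h s) \<le> indicator {0..T} s + (?h s)\<^sup>2"
      using abs_le_sq[of "a s \<omega>"] by (auto simp: indicator_def)
    then show "ennreal (norm (?h s)) \<le> ennreal (indicator {0..T} s) + ennreal ((?h s)\<^sup>2)"
      by (metis ennreal_leI ennreal_plus indicator_pos_le zero_le_power2)
  qed
  also have "\<dots> = ennreal T + (\<integral>\<^sup>+ s. ennreal ((a s \<omega>)\<^sup>2) * indicator {0..T} s \<partial>lborel)"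
  proof -
    have "(\<integral>\<^sup>+ s. ennreal (indicator {0..T} s) \<partial>lborel) = ennreal T"
      using assms(2) by (simp add: ennreal_indicator)
    then show ?thesis using hm by (subst nn_integral_add) (auto simp: J_eq)
  qed
  finally show ?thesis .
qed

lemma I_exp_int:
  assumes "std_brownian_motion M T B" "0 < T" "a \<in> H2 M T B" "k > 0"
  shows "integrable M (\<lambda>\<omega>. exp (k * \<bar>LINT s:{0..T}|lborel. a s \<omega>\<bar>))"
proof -
  define J where "J = (\<lambda>\<omega>. \<integral>\<^sup>+ s. ennreal ((a s \<omega>)\<^sup>2) * indicator {0..T} s \<partial>lborel)"
  define g where "g = (\<lambda>\<omega>. if J \<omega> = \<infinity> then \<infinity> else ennreal (exp (k * enn2real (J \<omega>))))"
  have Jm: "J \<in> borel_measurable M" unfolding J_def by (rule J_meas[OF assms(1-3)])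
  have gm: "g \<in> borel_measurable M" unfolding g_def using Jm by measurable
  have fin: "integral\<^sup>N M g < \<infinity>"
  proof -
    have "\<forall>q>0. exp_moment_enn M q J < \<infinity>"
      using assms(3) unfolding H2_def J_def by (simp only: mem_Collect_eq) (elim conjE)
    then have "exp_moment_enn M k J < \<infinity>" using assms(4) by blast
    then show ?thesis unfolding exp_moment_enn_def g_def .
  qed
  have Im: "(\<lambda>\<omega>. LINT s:{0..T}|lborel. a s \<omega>) \<in> borel_measurable M" by (rule I_meas[OF assms(1-3)])
  have pw: "ennreal (norm (exp (k * \<bar>LINT s:{0..T}|lborel. a s \<omega>\<bar>))) \<le> ennreal (exp (k * T)) * g \<omega>"
    if w: "\<omega> \<in> space M" for \<omega>
  proof (cases "J \<omega> = \<infinity>")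
    case True
    then show ?thesis by (simp add: g_def ennreal_mult_top)
  next
    case False
    let ?j = "enn2real (J \<omega>)"
    have Jj: "J \<omega> = ennreal ?j" using False by (simp add: ennreal_enn2real_if)
    have "ennreal \<bar>LINT s:{0..T}|lborel. a s \<omega>\<bar> \<le> ennreal T + J \<omega>"
      using I_bound[OF assms(1-3) w] unfolding J_def .
    also have "\<dots> = ennreal (T + ?j)"
      using assms(2) by (subst Jj) (simp add: ennreal_plus)
    finally have "\<bar>LINT s:{0..T}|lborel. a s \<omega>\<bar> \<le> T + ?j"
      using assms(2) by (metis ennreal_le_iff add_nonneg_nonneg enn2real_nonneg less_imp_le)
    then have "exp (k * \<bar>LINT s:{0..T}|lborel. a s \<omega>\<bar>) \<le> exp (k * T) * exp (k * ?j)"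
    proof -
      have "k * \<bar>LINT s:{0..T}|lborel. a s \<omega>\<bar> \<le> k * (T + ?j)"
        using \<open>\<bar>LINT s:{0..T}|lborel. a s \<omega>\<bar> \<le> T + ?j\<close> assms(4) by (intro mult_left_mono) auto
      then show ?thesis by (simp add: distrib_left exp_add[symmetric])
    qed
    then show ?thesis using False by (simp add: g_def ennreal_mult[symmetric])
  qed
  have "(\<integral>\<^sup>+ \<omega>. ennreal (norm (exp (k * \<bar>LINT s:{0..T}|lborel. a s \<omega>\<bar>))) \<partial>M)
      \<le> (\<integral>\<^sup>+ \<omega>. ennreal (exp (k * T)) * g \<omega> \<partial>M)"
    using pw by (intro nn_integral_mono) auto
  also have "\<dots> = ennreal (exp (k * T)) * integral\<^sup>N M g" using gm by (rule nn_integral_cmult)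
  also have "\<dots> < \<infinity>" using fin by (simp add: ennreal_mult_less_top)
  finally have "(\<integral>\<^sup>+ \<omega>. ennreal (norm (exp (k * \<bar>LINT s:{0..T}|lborel. a s \<omega>\<bar>))) \<partial>M) < \<infinity>" .
  moreover have "(\<lambda>\<omega>. exp (k * \<bar>LINT s:{0..T}|lborel. a s \<omega>\<bar>)) \<in> borel_measurable M"
    using Im by measurable
  ultimately show ?thesis by (intro integrableI_bounded)
qed



lemma nd_exp_bound:
  fixes \<sigma> k x :: real assumes s: "\<sigma> > 0"
  shows "normal_density 0 \<sigma> x * exp (k * x) \<le> exp (k\<^sup>2 * \<sigma>\<^sup>2) * sqrt 2 * normal_density 0 (sqrt 2 * \<sigma>) x"
proof -
  have c: "sqrt (2 * pi * (sqrt 2 * \<sigma>)\<^sup>2) = sqrt 2 * sqrt (2 * pi * \<sigma>\<^sup>2)"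
    by (simp add: power_mult_distrib real_sqrt_mult)
  have e: "- x\<^sup>2 / (2 * \<sigma>\<^sup>2) + k * x \<le> k\<^sup>2 * \<sigma>\<^sup>2 + - x\<^sup>2 / (2 * (sqrt 2 * \<sigma>)\<^sup>2)"
  proof -
    have eq: "k\<^sup>2 * \<sigma>\<^sup>2 + x\<^sup>2 / (4 * \<sigma>\<^sup>2) - k * x = (2 * k * \<sigma>\<^sup>2 - x)\<^sup>2 / (4 * \<sigma>\<^sup>2)"
      using s by (simp add: field_simps power2_eq_square)
    have "0 \<le> (2 * k * \<sigma>\<^sup>2 - x)\<^sup>2 / (4 * \<sigma>\<^sup>2)" by simp
    then have "k * x \<le> k\<^sup>2 * \<sigma>\<^sup>2 + x\<^sup>2 / (4 * \<sigma>\<^sup>2)" using eq by linarith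
    moreover have "(sqrt 2 * \<sigma>)\<^sup>2 = 2 * \<sigma>\<^sup>2" by (simp add: power_mult_distrib)
    moreover have "x\<^sup>2 / (2 * \<sigma>\<^sup>2) = x\<^sup>2 / (4 * \<sigma>\<^sup>2) + x\<^sup>2 / (4 * \<sigma>\<^sup>2)"
      using s by (simp add: field_simps)
    ultimately show ?thesis by (simp add: mult.assoc)
  qed
  have "normal_density 0 \<sigma> x * exp (k * x) = 1 / sqrt (2 * pi * \<sigma>\<^sup>2) * exp (- x\<^sup>2 / (2 * \<sigma>\<^sup>2) + k * x)"
    by (simp add: normal_density_def exp_add[symmetric])
  also have "\<dots> \<le> 1 / sqrt (2 * pi * \<sigma>\<^sup>2) * exp (k\<^sup>2 * \<sigma>\<^sup>2 + - x\<^sup>2 / (2 * (sqrt 2 * \<sigma>)\<^sup>2))"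
    using e by (intro mult_left_mono) auto
  also have "\<dots> = exp (k\<^sup>2 * \<sigma>\<^sup>2) * sqrt 2 * normal_density 0 (sqrt 2 * \<sigma>) x"
    unfolding normal_density_def c exp_add by simp
  finally show ?thesis .
qed

lemma nd_exp_int:
  fixes \<sigma> k :: real assumes s: "\<sigma> > 0"
  shows "integrable lborel (\<lambda>x. normal_density 0 \<sigma> x * exp (k * x))"
proof (rule Bochner_Integration.integrable_bound)
  show "integrable lborel (\<lambda>x. exp (k\<^sup>2 * \<sigma>\<^sup>2) * sqrt 2 * normal_density 0 (sqrt 2 * \<sigma>) x)"
    using s by (intro integrable_mult_right integrable_normal_density) simp
  show "AE x in lborel. norm (normal_density 0 \<sigma> x * exp (k * x)) \<le> norm (exp (k\<^sup>2 * \<sigma>\<^sup>2) * sqrt 2 * normal_density 0 (sqrt 2 * \<sigma>) x)"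
    using nd_exp_bound[OF s] by (simp add: abs_mult)
qed simp

lemma BT_exp_int:
  assumes bm: "std_brownian_motion M T B" and T: "0 < T"
  shows "integrable M (\<lambda>\<omega>. exp (k * B T \<omega>))"
proof -
  have "\<forall>s t. 0 \<le> s \<and> s < t \<and> t \<le> T \<longrightarrow>
        distributed M lborel (\<lambda>\<omega>. B t \<omega> - B s \<omega>) (normal_density 0 (sqrt (t - s)))"
    using bm unfolding std_brownian_motion_def by blast
  from this[rule_format, of 0 T] T
  have d: "distributed M lborel (\<lambda>\<omega>. B T \<omega> - B 0 \<omega>) (normal_density 0 (sqrt T))" by simp
  have m: "B T \<in> borel_measurable M" "B 0 \<in> borel_measurable M"
    using bm T unfolding std_brownian_motion_def by auto
  have ae: "AE \<omega> in M. B 0 \<omega> = 0" using bm unfolding std_brownian_motion_def by auto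
  have "integrable M (\<lambda>\<omega>. exp (k * (B T \<omega> - B 0 \<omega>)))"
    using distributed_integrable[OF d, of "\<lambda>x. exp (k * x)"] nd_exp_int[of "sqrt T" k] T by simp
  moreover have "AE \<omega> in M. exp (k * (B T \<omega> - B 0 \<omega>)) = exp (k * B T \<omega>)"
    using ae by eventually_elim simp
  ultimately show ?thesis
    using m by (subst integrable_cong_AE[symmetric]) auto
qed



lemma le_exp_self: "(t::real) \<le> exp t"
  using exp_ge_add_one_self[of t] by linarith

lemma U_bound:
  assumes g: "0 < \<gamma>" "\<gamma> < 1"
  shows "\<bar>U_tilde \<gamma> y\<bar> \<le> exp (2 * \<bar>y\<bar>)"
proof (cases "y \<ge> 0")
  case True
  have "exp (- (\<gamma> * y)) \<le> 1" using g True by simp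
  moreover have "1 - \<gamma> * y \<le> exp (- (\<gamma> * y))" using exp_ge_add_one_self[of "- (\<gamma> * y)"] by simp
  ultimately have "\<bar>1 - exp (- (\<gamma> * y))\<bar> \<le> \<gamma> * y" by simp
  then have "\<bar>U_tilde \<gamma> y\<bar> \<le> y"
    using g unfolding U_tilde_def by (simp add: abs_div_pos divide_le_eq abs_minus_commute mult.commute)
  also have "y \<le> exp y" by (rule le_exp_self)
  also have "\<dots> \<le> exp (2 * \<bar>y\<bar>)" using True by simp
  finally show ?thesis .
next
  case False
  define z where "z = - y"
  have z: "z > 0" using False z_def by simp
  have e1: "1 - \<gamma> * z \<le> exp (- (\<gamma> * z))" using exp_ge_add_one_self[of "- (\<gamma> * z)"] by simp
  have "exp (\<gamma> * z) * (1 - \<gamma> * z) \<le> exp (\<gamma> * z) * exp (- (\<gamma> * z))"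
    using e1 by (intro mult_left_mono) auto
  then have "exp (\<gamma> * z) - 1 \<le> \<gamma> * z * exp (\<gamma> * z)"
    by (simp add: exp_minus algebra_simps)
  moreover have "1 \<le> exp (\<gamma> * z)" using g z by simp
  ultimately have "\<bar>U_tilde \<gamma> y\<bar> \<le> z * exp (\<gamma> * z)"
    using g unfolding U_tilde_def z_def by (simp add: abs_div_pos divide_le_eq mult.commute mult.left_commute)
  also have "\<dots> \<le> exp z * exp z"
    using g z le_exp_self[of z] by (intro mult_mono) auto
  also have "\<dots> = exp (2 * \<bar>y\<bar>)" using z z_def by (simp add: exp_add[symmetric])
  finally show ?thesis .
qed

lemma U_lim: "((\<lambda>\<gamma>. U_tilde \<gamma> y) \<longlongrightarrow> y) (at_right 0)"
proof -
  have "((\<lambda>\<gamma>. exp (- \<gamma> * y)) has_real_derivative exp (- 0 * y) * (- y)) (at 0)"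
    by (auto intro!: derivative_eq_intros)
  then have "((\<lambda>h. (exp (- (0 + h) * y) - exp (- 0 * y)) / h) \<longlongrightarrow> - y) (at 0)"
    unfolding DERIV_def by simp
  then have "((\<lambda>h. - ((exp (- (0 + h) * y) - exp (- 0 * y)) / h)) \<longlongrightarrow> y) (at 0)"
    using tendsto_minus by fastforce
  moreover have "(\<lambda>h. - ((exp (- (0 + h) * y) - exp (- 0 * y)) / h)) = (\<lambda>h. U_tilde h y)"
    by (rule ext) (simp add: U_tilde_def minus_divide_left)
  ultimately have "((\<lambda>h. U_tilde h y) \<longlongrightarrow> y) (at 0)" by simp
  then show ?thesis by (rule tendsto_mono[OF at_le, rotated]) simp
qed

lemma exp3: "exp (p + q + r) \<le> exp (3 * p) + exp (3 * q) + exp (3 * (r::real))"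
proof -
  have "exp (p + q + r) \<le> exp (3 * max p (max q r))" by simp
  also have "\<dots> \<le> exp (3 * p) + exp (3 * q) + exp (3 * r)"
    by (auto simp: max_def add_increasing add_increasing2 add_nonneg_nonneg)
  finally show ?thesis .
qed

lemma exp_abs_le: "exp \<bar>t::real\<bar> \<le> exp t + exp (- t)"
  by (cases "t \<ge> 0") (auto simp: add_increasing add_increasing2)


lemma W_props:
  assumes "W \<in> Wset M T B"
  shows "W \<in> borel_measurable M" "\<And>q. q \<noteq> 0 \<Longrightarrow> integrable M (\<lambda>\<omega>. exp (q * W \<omega>))"
proof -
  have i: "\<And>q. q \<noteq> 0 \<Longrightarrow> integrable M (\<lambda>\<omega>. exp (q * W \<omega>))" using assms unfolding Wset_def by auto
  show "\<And>q. q \<noteq> 0 \<Longrightarrow> integrable M (\<lambda>\<omega>. exp (q * W \<omega>))" by (rule i)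
  have "(\<lambda>\<omega>. exp (1 * W \<omega>)) \<in> borel_measurable M" using i[of 1] by (intro borel_measurable_integrable) simp
  then have "(\<lambda>\<omega>. ln (exp (1 * W \<omega>))) \<in> borel_measurable M" by measurable
  then show "W \<in> borel_measurable M" by simp
qed

lemma Y_props:
  assumes T: "T > 0" and bm: "std_brownian_motion M T B" and W: "W \<in> Wset M T B" and a: "a \<in> H2 M T B"
  shows "(\<lambda>\<omega>. state_proc x0 B a T \<omega> - W \<omega>) \<in> borel_measurable M"
    and "c > 0 \<Longrightarrow> integrable M (\<lambda>\<omega>. exp (c * \<bar>state_proc x0 B a T \<omega> - W \<omega>\<bar>))"
proof -
  let ?I = "\<lambda>\<omega>. LINT s:{0..T}|lborel. a s \<omega>"
  have Wm: "W \<in> borel_measurable M" using W_props[OF W] by blast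
  have Bm: "B T \<in> borel_measurable M" using bm T unfolding std_brownian_motion_def by auto
  have Im: "?I \<in> borel_measurable M" by (rule I_meas[OF bm T a])
  show Ym: "(\<lambda>\<omega>. state_proc x0 B a T \<omega> - W \<omega>) \<in> borel_measurable M"
    unfolding state_proc_def using Wm Bm Im by measurable
  assume c: "c > 0"
  define g where "g = (\<lambda>\<omega>. exp (c * \<bar>x0\<bar>) * (exp (3 * c * \<bar>?I \<omega>\<bar>)
     + (exp ((3 * c) * B T \<omega>) + exp ((- (3 * c)) * B T \<omega>))
     + (exp ((3 * c) * W \<omega>) + exp ((- (3 * c)) * W \<omega>))))"
  have i1: "integrable M (\<lambda>\<omega>. exp (3 * c * \<bar>?I \<omega>\<bar>))" using c by (intro I_exp_int[OF bm T a]) simp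
  have i2: "integrable M (\<lambda>\<omega>. exp (q * B T \<omega>))" for q by (rule BT_exp_int[OF bm T])
  have i3: "integrable M (\<lambda>\<omega>. exp (q * W \<omega>))" if "q \<noteq> 0" for q using W_props(2)[OF W that] .
  have c3: "3 * c \<noteq> 0" "- (3 * c) \<noteq> 0" using c by auto
  have gs: "integrable M (\<lambda>\<omega>. exp (3 * c * \<bar>?I \<omega>\<bar>)
     + (exp ((3 * c) * B T \<omega>) + exp ((- (3 * c)) * B T \<omega>))
     + (exp ((3 * c) * W \<omega>) + exp ((- (3 * c)) * W \<omega>)))"
    by (rule Bochner_Integration.integrable_add[OF Bochner_Integration.integrable_add[OF i1
          Bochner_Integration.integrable_add[OF i2[of "3 * c"] i2[of "- (3 * c)"]]]
          Bochner_Integration.integrable_add[OF i3[OF c3(1)] i3[OF c3(2)]]])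
  have gi: "integrable M g"
    unfolding g_def by (rule integrable_mult_right[OF gs])
  show "integrable M (\<lambda>\<omega>. exp (c * \<bar>state_proc x0 B a T \<omega> - W \<omega>\<bar>))"
  proof (rule Bochner_Integration.integrable_bound[OF gi])
    show "(\<lambda>\<omega>. exp (c * \<bar>state_proc x0 B a T \<omega> - W \<omega>\<bar>)) \<in> borel_measurable M"
      using Ym by measurable
    show "AE \<omega> in M. norm (exp (c * \<bar>state_proc x0 B a T \<omega> - W \<omega>\<bar>)) \<le> norm (g \<omega>)"
    proof (intro AE_I2)
      fix \<omega>
      let ?i = "?I \<omega>" and ?b = "B T \<omega>" and ?w = "W \<omega>"
      have "\<bar>state_proc x0 B a T \<omega> - W \<omega>\<bar> \<le> \<bar>x0\<bar> + (\<bar>?i\<bar> + \<bar>?b\<bar> + \<bar>?w\<bar>)"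
        unfolding state_proc_def by linarith
      then have "c * \<bar>state_proc x0 B a T \<omega> - W \<omega>\<bar> \<le> c * \<bar>x0\<bar> + (c * \<bar>?i\<bar> + c * \<bar>?b\<bar> + c * \<bar>?w\<bar>)"
        using c by (metis distrib_left mult_left_mono less_imp_le)
      then have "exp (c * \<bar>state_proc x0 B a T \<omega> - W \<omega>\<bar>) \<le> exp (c * \<bar>x0\<bar>) * exp (c * \<bar>?i\<bar> + c * \<bar>?b\<bar> + c * \<bar>?w\<bar>)"
        by (simp add: exp_add[symmetric])
      also have "\<dots> \<le> exp (c * \<bar>x0\<bar>) * (exp (3 * (c * \<bar>?i\<bar>)) + exp (3 * (c * \<bar>?b\<bar>)) + exp (3 * (c * \<bar>?w\<bar>)))"
        by (intro mult_left_mono exp3) auto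
      also have "\<dots> \<le> g \<omega>"
      proof -
        have 1: "exp (3 * (c * \<bar>?b\<bar>)) \<le> exp ((3 * c) * ?b) + exp ((- (3 * c)) * ?b)"
          using exp_abs_le[of "3 * c * ?b"] c by (simp add: abs_mult mult.assoc)
        have 2: "exp (3 * (c * \<bar>?w\<bar>)) \<le> exp ((3 * c) * ?w) + exp ((- (3 * c)) * ?w)"
          using exp_abs_le[of "3 * c * ?w"] c by (simp add: abs_mult mult.assoc)
        show ?thesis unfolding g_def using 1 2 by (intro mult_left_mono) (auto simp: mult.assoc)
      qed
      finally show "norm (exp (c * \<bar>state_proc x0 B a T \<omega> - W \<omega>\<bar>)) \<le> norm (g \<omega>)" by simp
    qed
  qed
qed

theorem lemma5p1:
  fixes M :: "'a measure" and T x0 :: real and B a :: "real \<Rightarrow> 'a \<Rightarrow> real" and W :: "'a \<Rightarrow> real"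
  assumes "T > 0"
    and "std_brownian_motion M T B"
    and "W \<in> Wset M T B"
    and "a \<in> H2 M T B"
  shows "unif_integrable M {0<..<1} (\<lambda>\<gamma> \<omega>. U_tilde \<gamma> (state_proc x0 B a T \<omega> - W \<omega>))
    \<and> integrable M (\<lambda>\<omega>. state_proc x0 B a T \<omega> - W \<omega>)
    \<and> (\<integral>\<omega>. state_proc x0 B a T \<omega> - W \<omega> \<partial>M)
        = (\<integral>\<omega>. Lim (at_right 0) (\<lambda>\<gamma>. U_tilde \<gamma> (state_proc x0 B a T \<omega> - W \<omega>)) \<partial>M)
    \<and> ((\<lambda>\<gamma>. \<integral>\<omega>. U_tilde \<gamma> (state_proc x0 B a T \<omega> - W \<omega>) \<partial>M)
        \<longlongrightarrow> (\<integral>\<omega>. state_proc x0 B a T \<omega> - W \<omega> \<partial>M)) (at_right 0)"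
  proof -
  define Y where "Y = (\<lambda>\<omega>. state_proc x0 B a T \<omega> - W \<omega>)"
  have Ym: "Y \<in> borel_measurable M" unfolding Y_def by (rule Y_props(1)[OF assms])
  have Ei: "\<And>c. c > 0 \<Longrightarrow> integrable M (\<lambda>\<omega>. exp (c * \<bar>Y \<omega>\<bar>))"
    unfolding Y_def by (rule Y_props(2)[OF assms])
  have Um: "\<And>\<gamma>. (\<lambda>\<omega>. U_tilde \<gamma> (Y \<omega>)) \<in> borel_measurable M"
    unfolding U_tilde_def using Ym by measurable
  have UI: "unif_integrable M {0<..<1} (\<lambda>\<gamma> \<omega>. U_tilde \<gamma> (Y \<omega>))"
    unfolding unif_integrable_def
  proof (intro conjI ballI)
    fix \<gamma> :: real show "(\<lambda>\<omega>. U_tilde \<gamma> (Y \<omega>)) \<in> borel_measurable M" by (rule Um)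
  next
    define C where "C = (\<integral>\<omega>. exp (4 * \<bar>Y \<omega>\<bar>) \<partial>M)"
    have b: "(SUP \<gamma>\<in>{0<..<1}. \<integral>\<^sup>+\<omega>. ennreal \<bar>U_tilde \<gamma> (Y \<omega>)\<bar> * indicator {\<omega>\<in>space M. \<bar>U_tilde \<gamma> (Y \<omega>)\<bar> > K} \<omega> \<partial>M)
       \<le> ennreal (C / K)" if K: "K > 0" for K
    proof (rule SUP_least)
      fix \<gamma> :: real assume \<gamma>: "\<gamma> \<in> {0<..<1}"
      have "(\<integral>\<^sup>+\<omega>. ennreal \<bar>U_tilde \<gamma> (Y \<omega>)\<bar> * indicator {\<omega>\<in>space M. \<bar>U_tilde \<gamma> (Y \<omega>)\<bar> > K} \<omega> \<partial>M)
          \<le> (\<integral>\<^sup>+\<omega>. ennreal (exp (4 * \<bar>Y \<omega>\<bar>) / K) \<partial>M)"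
      proof (intro nn_integral_mono)
        fix \<omega>
        let ?u = "\<bar>U_tilde \<gamma> (Y \<omega>)\<bar>"
        show "ennreal ?u * indicator {x\<in>space M. \<bar>U_tilde \<gamma> (Y x)\<bar> > K} \<omega> \<le> ennreal (exp (4 * \<bar>Y \<omega>\<bar>) / K)"
        proof (cases "?u > K")
          case True
          have "?u = ?u * K / K" using K by simp
          also have "\<dots> \<le> ?u * ?u / K" using K True by (intro divide_right_mono mult_left_mono) auto
          also have "\<dots> \<le> exp (2 * \<bar>Y \<omega>\<bar>) * exp (2 * \<bar>Y \<omega>\<bar>) / K"
            using K U_bound[of \<gamma> "Y \<omega>"] \<gamma> by (intro divide_right_mono mult_mono) auto
          also have "\<dots> = exp (4 * \<bar>Y \<omega>\<bar>) / K" by (simp add: exp_add[symmetric])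
          finally have "?u \<le> exp (4 * \<bar>Y \<omega>\<bar>) / K" .
          then show ?thesis by (auto simp: indicator_def intro: ennreal_leI)
        next
          case False
          then show ?thesis by (simp add: indicator_def)
        qed
      qed
      also have "\<dots> = ennreal (C / K)"
      proof -
        have "integrable M (\<lambda>\<omega>. exp (4 * \<bar>Y \<omega>\<bar>) / K)" using Ei[of 4] by (intro integrable_divide) auto
        then have "(\<integral>\<^sup>+\<omega>. ennreal (exp (4 * \<bar>Y \<omega>\<bar>) / K) \<partial>M) = ennreal (\<integral>\<omega>. exp (4 * \<bar>Y \<omega>\<bar>) / K \<partial>M)"
          using K by (intro nn_integral_eq_integral) auto
        then show ?thesis unfolding C_def by simp
      qed
      finally show "(\<integral>\<^sup>+\<omega>. ennreal \<bar>U_tilde \<gamma> (Y \<omega>)\<bar> * indicator {\<omega>\<in>space M. \<bar>U_tilde \<gamma> (Y \<omega>)\<bar> > K} \<omega> \<partial>M)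
          \<le> ennreal (C / K)" .
    qed
    have l: "((\<lambda>K. ennreal (C / K)) \<longlongrightarrow> 0) at_top"
    proof -
      have "((\<lambda>K. C / K) \<longlongrightarrow> 0) at_top"
        by (rule tendsto_divide_0[OF tendsto_const filterlim_at_top_imp_at_infinity[OF filterlim_ident]])
      then have "((\<lambda>K. ennreal (C / K)) \<longlongrightarrow> ennreal 0) at_top" by (rule tendsto_ennrealI)
      then show ?thesis by simp
    qed
    show "((\<lambda>K. SUP \<gamma>\<in>{0<..<1}. \<integral>\<^sup>+\<omega>. ennreal \<bar>U_tilde \<gamma> (Y \<omega>)\<bar> * indicator {\<omega>\<in>space M. \<bar>U_tilde \<gamma> (Y \<omega>)\<bar> > K} \<omega> \<partial>M)
        \<longlongrightarrow> 0) at_top"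
    proof (rule tendsto_sandwich[OF _ _ tendsto_const l])
      show "\<forall>\<^sub>F K in at_top. 0 \<le> (SUP \<gamma>\<in>{0<..<1}. \<integral>\<^sup>+\<omega>. ennreal \<bar>U_tilde \<gamma> (Y \<omega>)\<bar> * indicator {\<omega>\<in>space M. \<bar>U_tilde \<gamma> (Y \<omega>)\<bar> > K} \<omega> \<partial>M)"
        by simp
      show "\<forall>\<^sub>F K in at_top. (SUP \<gamma>\<in>{0<..<1}. \<integral>\<^sup>+\<omega>. ennreal \<bar>U_tilde \<gamma> (Y \<omega>)\<bar> * indicator {\<omega>\<in>space M. \<bar>U_tilde \<gamma> (Y \<omega>)\<bar> > K} \<omega> \<partial>M) \<le> ennreal (C / K)"
        using eventually_gt_at_top[of "0::real"] by eventually_elim (rule b)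
    qed
  qed
  have Yint: "integrable M Y"
  proof (rule Bochner_Integration.integrable_bound[OF Ei[of 1]])
    show "AE \<omega> in M. norm (Y \<omega>) \<le> norm (exp (1 * \<bar>Y \<omega>\<bar>))"
      using le_exp_self by (intro AE_I2) simp
  qed (simp_all add: Ym)
  have Lim: "Lim (at_right 0) (\<lambda>\<gamma>. U_tilde \<gamma> (Y \<omega>)) = Y \<omega>" for \<omega>
    by (rule tendsto_Lim[OF _ U_lim]) simp
  have eq3: "(\<integral>\<omega>. Y \<omega> \<partial>M) = (\<integral>\<omega>. Lim (at_right 0) (\<lambda>\<gamma>. U_tilde \<gamma> (Y \<omega>)) \<partial>M)"
    by (simp add: Lim)
  have conv: "((\<lambda>\<gamma>. \<integral>\<omega>. U_tilde \<gamma> (Y \<omega>) \<partial>M) \<longlongrightarrow> (\<integral>\<omega>. Y \<omega> \<partial>M)) (at_right 0)"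
    unfolding filterlim_at_right_to_top
  proof (rule integral_dominated_convergence_at_top[where w="\<lambda>\<omega>. exp (2 * \<bar>Y \<omega>\<bar>)"])
    show "Y \<in> borel_measurable M" by (rule Ym)
    show "\<And>t. (\<lambda>\<omega>. U_tilde (inverse t) (Y \<omega>)) \<in> borel_measurable M" by (rule Um)
    show "integrable M (\<lambda>\<omega>. exp (2 * \<bar>Y \<omega>\<bar>))" by (rule Ei) simp
    show "AE \<omega> in M. ((\<lambda>t. U_tilde (inverse t) (Y \<omega>)) \<longlongrightarrow> Y \<omega>) at_top"
      by (intro AE_I2 filterlim_compose[OF U_lim filterlim_inverse_at_right_top])
    show "\<forall>\<^sub>F t in at_top. AE \<omega> in M. norm (U_tilde (inverse t) (Y \<omega>)) \<le> exp (2 * \<bar>Y \<omega>\<bar>)"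
      using eventually_gt_at_top[of "1::real"]
    proof eventually_elim
      case (elim t)
      then have "0 < inverse t" "inverse t < 1" by (auto simp: inverse_less_1_iff)
      then show ?case by (intro AE_I2) (simp add: U_bound)
    qed
  qed
  show ?thesis using UI Yint eq3 conv unfolding Y_def by blast
qed

end
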